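(* Let $k\ge1$ and let $Y$ be a random variable in $[0,1]^k$. Then for all $s>0$ and $r\ge0$, $$D^{(q)}(r\,|\,Y,\|\cdot\|_\infty,s)\le e^{-r/k}.$$ Moreover, if $Y_1\le\dots\le Y_k$ almost surely, the same bound holds when the infimum defining $D^{(q)}$ is restricted to codebooks $\mathcal C$ all of whose elements $\hat y$ satisfy $\hat y_1\le\dots\le\hat y_k$.
   Context: $D^{(q)}(r\,|\,Y,\|\cdot\|_\infty,s)=\inf\{(\mathbb E\min_{a\in\mathcal C}\|Y-a\|_\infty^s)^{1/s}:\mathcal C\subset\mathbb R^k\text{ finite},\ \log\#\mathcal C\le r\}$ (natural log). *)

theory Defs
  imports "HOL-Probability.Probability"
begin

text \<open>Points of R^k are represented as functions nat => real that vanish outside {..<k}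
  (coordinates 0..k-1 correspond to y_1..y_k).\<close>

definition vecs :: "nat \<Rightarrow> (nat \<Rightarrow> real) set" where
  "vecs k = {a. \<forall>i\<ge>k. a i = 0}"

definition sup_dist :: "nat \<Rightarrow> (nat \<Rightarrow> real) \<Rightarrow> (nat \<Rightarrow> real) \<Rightarrow> real" where
  "sup_dist k x a = Max ((\<lambda>i. \<bar>x i - a i\<bar>) ` {..<k})"

definition quant_err ::
  "'w measure \<Rightarrow> ('w \<Rightarrow> nat \<Rightarrow> real) \<Rightarrow> nat \<Rightarrow> real \<Rightarrow> (nat \<Rightarrow> real) set \<Rightarrow> real" where
  "quant_err M Y k s C =
     (integral\<^sup>L M (\<lambda>\<omega>. Min ((\<lambda>a. sup_dist k (Y \<omega>) a powr s) ` C))) powr (1 / s)"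

text \<open>Quantization distortion D^(q)(r | Y, ||.||_inf, s), with the infimum over finite
  nonempty codebooks C in R^k with ln #C <= r whose elements all satisfy P.
  The unrestricted D^(q) is the case P = (\<lambda>_. True).\<close>
definition Dq ::
  "'w measure \<Rightarrow> ('w \<Rightarrow> nat \<Rightarrow> real) \<Rightarrow> nat \<Rightarrow> real \<Rightarrow> real \<Rightarrow> ((nat \<Rightarrow> real) \<Rightarrow> bool) \<Rightarrow> real" where
  "Dq M Y k s r P = Inf {quant_err M Y k s C | C. finite C \<and> C \<noteq> {} \<and> C \<subseteq> vecs k
       \<and> (\<forall>a\<in>C. P a) \<and> ln (real (card C)) \<le> r}"

definition sorted_vec :: "nat \<Rightarrow> (nat \<Rightarrow> real) \<Rightarrow> bool" where
  "sorted_vec k a \<longleftrightarrow> (\<forall>i j. i \<le> j \<longrightarrow> j < k \<longrightarrow> a i \<le> a j)"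

end

theory Submission
  imports Defs
begin

lemma generic:
  fixes M :: "'w measure" and Y :: "'w \<Rightarrow> nat \<Rightarrow> real"
  assumes ps: "prob_space M" and k: "k \<ge> 1" and s: "s > 0"
    and C: "finite C" "C \<noteq> {}" "C \<subseteq> vecs k" "\<forall>a\<in>C. P a" "ln (real (card C)) \<le> r"
    and ae: "AE \<omega> in M. \<exists>a\<in>C. sup_dist k (Y \<omega>) a \<le> c" and c: "0 \<le> c"
  shows "Dq M Y k s r P \<le> c"
proof -
  interpret prob_space M by (rule ps)
  let ?f = "\<lambda>\<omega>. Min ((\<lambda>a. sup_dist k (Y \<omega>) a powr s) ` C)"
  have f0: "?f \<omega> \<ge> 0" for \<omega> using C by auto
  have fle: "AE \<omega> in M. ?f \<omega> \<le> c powr s"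
  proof (rule AE_mp[OF ae], rule AE_I2, clarify)
    fix \<omega> a assume a: "a \<in> C" "sup_dist k (Y \<omega>) a \<le> c"
    have "?f \<omega> \<le> sup_dist k (Y \<omega>) a powr s" using C a by auto
    also have "\<dots> \<le> c powr s"
    proof (rule powr_mono2)
      show "0 \<le> sup_dist k (Y \<omega>) a" unfolding sup_dist_def using k
        by (subst Max_ge_iff) (auto simp: lessThan_empty_iff intro!: exI[of _ 0])
    qed (use s a in auto)
    finally show "?f \<omega> \<le> c powr s" .
  qed
  have I: "integral\<^sup>L M ?f \<le> c powr s"
  proof (cases "integrable M ?f")
    case True
    have "integral\<^sup>L M ?f \<le> integral\<^sup>L M (\<lambda>_. c powr s)"
      by (rule integral_mono_AE[OF True _ fle]) simp
    also have "\<dots> = c powr s" by (simp add: prob_space)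
    finally show ?thesis .
  next
    case False thus ?thesis by (simp add: not_integrable_integral_eq)
  qed
  have I0: "integral\<^sup>L M ?f \<ge> 0" by (rule integral_nonneg_AE) (simp add: f0)
  have q: "quant_err M Y k s C \<le> c"
  proof -
    have "quant_err M Y k s C = integral\<^sup>L M ?f powr (1/s)" unfolding quant_err_def ..
    also have "\<dots> \<le> (c powr s) powr (1/s)" by (rule powr_mono2) (use s I I0 in auto)
    also have "\<dots> = c" using s c by (simp add: powr_powr)
    finally show ?thesis .
  qed
  show ?thesis unfolding Dq_def
  proof (rule order.trans[OF cInf_lower q])
    show "quant_err M Y k s C \<in> {quant_err M Y k s C |C. finite C \<and> C \<noteq> {} \<and> C \<subseteq> vecs k
       \<and> (\<forall>a\<in>C. P a) \<and> ln (real (card C)) \<le> r}" using C by blast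
    show "bdd_below {quant_err M Y k s C |C. finite C \<and> C \<noteq> {} \<and> C \<subseteq> vecs k
       \<and> (\<forall>a\<in>C. P a) \<and> ln (real (card C)) \<le> r}"
      by (rule bdd_belowI[of _ 0]) (auto simp: quant_err_def)
  qed
qed

definition gq :: "nat \<Rightarrow> real \<Rightarrow> real" where
  "gq m x = (2 * real (min (m-1) (nat \<lfloor>real m * x\<rfloor>)) + 1) / (2 * real m)"

lemma gq_in: "gq m x \<in> (\<lambda>j. (2 * real j + 1) / (2 * real m)) ` {..<m}" if "m \<ge> 1"
  unfolding gq_def using that by (intro imageI) auto

lemma gq_mono: "x \<le> y \<Longrightarrow> gq m x \<le> gq m y"
proof -
  assume "x \<le> y"
  then have "\<lfloor>real m * x\<rfloor> \<le> \<lfloor>real m * y\<rfloor>" by (intro floor_mono mult_left_mono) auto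
  then have "min (m-1) (nat \<lfloor>real m * x\<rfloor>) \<le> min (m-1) (nat \<lfloor>real m * y\<rfloor>)" by (simp add: min.coboundedI2 nat_mono)
  then show ?thesis unfolding gq_def by (intro divide_right_mono) auto
qed

lemma gq_bound:
  assumes "m \<ge> 1" "0 \<le> x" "x \<le> 1"
  shows "\<bar>x - gq m x\<bar> \<le> 1 / (2 * real m)"
proof -
  define j where "j = min (m-1) (nat \<lfloor>real m * x\<rfloor>)"
  have mx: "0 \<le> real m * x" "real m * x \<le> real m" using assms by (auto simp: mult_left_le)
  have "real j \<le> real m * x \<and> real m * x \<le> real j + 1"
  proof (cases "nat \<lfloor>real m * x\<rfloor> \<le> m - 1")
    case True
    then have "j = nat \<lfloor>real m * x\<rfloor>" by (simp add: j_def)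
    then have "real j = of_int \<lfloor>real m * x\<rfloor>" using mx by simp
    then show ?thesis by linarith
  next
    case False
    then have "j = m - 1" by (simp add: j_def)
    moreover have "real m * x \<ge> real m - 1" using False mx assms(1) by linarith
    ultimately show ?thesis using mx assms(1) by (simp add: of_nat_diff)
  qed
  then have "\<bar>2 * real m * x - (2 * real j + 1)\<bar> \<le> 1" by auto
  moreover have "x - gq m x = (2 * real m * x - (2 * real j + 1)) / (2 * real m)"
    using assms(1) unfolding gq_def j_def[symmetric] by (simp add: field_simps)
  ultimately show ?thesis using assms(1) by (simp add: abs_div divide_right_mono)
qed

theorem lemma3:
  fixes M :: "'w measure" and Y :: "'w \<Rightarrow> nat \<Rightarrow> real" and k :: nat and s r :: real
  assumes "prob_space M"
    and "k \<ge> 1"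
    and "\<And>i. i < k \<Longrightarrow> (\<lambda>\<omega>. Y \<omega> i) \<in> borel_measurable M"
    and "\<And>\<omega> i. \<omega> \<in> space M \<Longrightarrow> i < k \<Longrightarrow> Y \<omega> i \<in> {0..1}"
    and "s > 0" and "r \<ge> 0"
  shows "Dq M Y k s r (\<lambda>_. True) \<le> exp (- r / real k)
     \<and> ((AE \<omega> in M. sorted_vec k (Y \<omega>)) \<longrightarrow> Dq M Y k s r (sorted_vec k) \<le> exp (- r / real k))"
proof -
  note k = assms(2) and s = assms(5) and r = assms(6)
  define m where "m = nat \<lfloor>exp (r / real k)\<rfloor>"
  have e1: "exp (r / real k) \<ge> 1" using r k by simp
  have m1: "m \<ge> 1" unfolding m_def using e1 by linarith
  have mle: "real m \<le> exp (r / real k)" unfolding m_def using e1 by linarith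
  have mgt: "exp (r / real k) < real m + 1" unfolding m_def using e1 by linarith
  define c where "c = 1 / (2 * real m)"
  have c0: "0 \<le> c" by (simp add: c_def)
  have cle: "c \<le> exp (- r / real k)"
  proof -
    have "exp (r / real k) \<le> 2 * real m" using mgt m1 by linarith
    then have "1 / (2 * real m) \<le> 1 / exp (r / real k)"
      using m1 by (intro divide_left_mono) auto
    then show ?thesis by (simp add: c_def exp_minus field_simps)
  qed
  define G where "G = (\<lambda>j. (2 * real j + 1) / (2 * real m)) ` {..<m}"
  define Q where "Q = (\<lambda>y i. if i < k then gq m (y i) else 0)"
  define C where "C = {a \<in> vecs k. \<forall>i<k. a i \<in> G}"
  have finG: "finite G" and cardG: "card G \<le> m" unfolding G_def
    using card_image_le[of "{..<m}"] by auto
  have Csub: "C \<subseteq> (\<lambda>f i. if i < k then f i else 0) ` PiE {..<k} (\<lambda>_. G)"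
  proof
    fix a assume a: "a \<in> C"
    show "a \<in> (\<lambda>f i. if i < k then f i else 0) ` PiE {..<k} (\<lambda>_. G)"
    proof (rule image_eqI[of _ _ "restrict a {..<k}"])
      show "a = (\<lambda>i. if i < k then restrict a {..<k} i else 0)"
        using a by (auto simp: C_def vecs_def)
    qed (use a in \<open>auto simp: C_def\<close>)
  qed
  have finC: "finite C"
    by (rule finite_subset[OF Csub]) (intro finite_imageI finite_PiE finG; simp)
  have cardC: "card C \<le> m ^ k"
  proof -
    have "card C \<le> card ((\<lambda>f i. if i < k then f i else 0) ` PiE {..<k} (\<lambda>_. G))"
      by (rule card_mono[OF _ Csub]) (intro finite_imageI finite_PiE finG; simp)
    also have "\<dots> \<le> card (PiE {..<k} (\<lambda>_. G))" by (rule card_image_le) (intro finite_PiE finG; simp)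
    also have "\<dots> = card G ^ k" by (simp add: card_PiE)
    also have "\<dots> \<le> m ^ k" by (rule power_mono[OF cardG]) simp
    finally show ?thesis .
  qed
  have lnC: "ln (real (card D)) \<le> r" if "D \<subseteq> C" "D \<noteq> {}" for D
  proof -
    have D0: "card D > 0" using that finC by (simp add: card_gt_0_iff finite_subset)
    have "card D \<le> m ^ k" using card_mono[OF finC that(1)] cardC by simp
    then have "ln (real (card D)) \<le> ln (real m ^ k)" using D0 m1
      by (subst ln_le_cancel_iff) (auto simp flip: of_nat_power)
    also have "\<dots> = real k * ln (real m)" using m1 by (simp add: ln_realpow)
    also have "\<dots> \<le> real k * (r / real k)"
    proof (rule mult_left_mono)
      have "ln (real m) \<le> ln (exp (r / real k))" using mle m1 by (subst ln_le_cancel_iff) auto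
      then show "ln (real m) \<le> r / real k" by simp
    qed simp
    also have "\<dots> = r" using k by simp
    finally show ?thesis .
  qed
  have QC: "Q y \<in> C" for y
    unfolding C_def Q_def vecs_def G_def using gq_in[OF m1] by auto
  have Qd: "sup_dist k y (Q y) \<le> c" if "\<forall>i<k. y i \<in> {0..1}" for y
    unfolding sup_dist_def using k that gq_bound[OF m1]
    by (subst Max_le_iff) (auto simp: Q_def c_def lessThan_empty_iff)
  have Qs: "sorted_vec k (Q y)" if "sorted_vec k y" for y
    using that unfolding sorted_vec_def Q_def by (auto intro: gq_mono)
  define a0 where "a0 = (\<lambda>i. if i < k then 1 / (2 * real m) else (0::real))"
  have a0: "a0 \<in> C" "sorted_vec k a0"
    unfolding a0_def C_def vecs_def G_def sorted_vec_def using m1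
    by (auto intro!: image_eqI[of _ _ 0])
  have P1: "Dq M Y k s r (\<lambda>_. True) \<le> c"
  proof (rule generic[OF assms(1) k s finC])
    show "C \<noteq> {}" using a0 by auto
    show "C \<subseteq> vecs k" by (auto simp: C_def)
    show "ln (real (card C)) \<le> r" using lnC[OF order_refl] a0 by auto
    show "AE \<omega> in M. \<exists>a\<in>C. sup_dist k (Y \<omega>) a \<le> c"
    proof (rule AE_I2)
      fix \<omega> assume "\<omega> \<in> space M"
      then have "sup_dist k (Y \<omega>) (Q (Y \<omega>)) \<le> c" using assms(4) by (intro Qd) simp
      then show "\<exists>a\<in>C. sup_dist k (Y \<omega>) a \<le> c" using QC by blast
    qed
  qed (use c0 in auto)
  have P2: "Dq M Y k s r (sorted_vec k) \<le> c" if ae: "AE \<omega> in M. sorted_vec k (Y \<omega>)"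
  proof (rule generic[OF assms(1) k s])
    let ?D = "{a \<in> C. sorted_vec k a}"
    show "finite ?D" using finC by simp
    show "?D \<noteq> {}" using a0 by auto
    show "?D \<subseteq> vecs k" by (auto simp: C_def)
    show "ln (real (card ?D)) \<le> r" using a0 by (intro lnC) auto
    show "\<forall>a\<in>?D. sorted_vec k a" by simp
    show "AE \<omega> in M. \<exists>a\<in>?D. sup_dist k (Y \<omega>) a \<le> c"
    proof (rule AE_mp[OF ae], rule AE_I2, rule impI)
      fix \<omega> assume "\<omega> \<in> space M" "sorted_vec k (Y \<omega>)"
      then have "sup_dist k (Y \<omega>) (Q (Y \<omega>)) \<le> c" "sorted_vec k (Q (Y \<omega>))"
        using assms(4) by (intro Qd Qs; simp)+
      then show "\<exists>a\<in>?D. sup_dist k (Y \<omega>) a \<le> c" using QC by blast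
    qed
  qed (use c0 in auto)
  show ?thesis using P1 P2 cle by auto
qed

end
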